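(* For all integers $n,m\ge0$, $$\sum_{k=0}^n\binom{n}{k}(-1)^kH_k(m)=(-1)^n\frac{m!}{n!}s(n,m)\qquad\text{and}\qquad \sum_{k=m}^n\binom{n}{k}\frac{s(k,m)}{k!}=\frac{1}{m!}H_n(m).$$
   Context: For integers $m\ge 1$, $n\ge 0$, the multiple harmonic-like numbers are $H_n(m)=\sum_{1\le k_1+k_2+\cdots+k_m\le n}\frac{1}{k_1k_2\cdots k_m}$ (sum over positive integers $k_1,\dots,k_m$), with $H_n(0)=1$ for $n\ge 0$ and $H_0(m)=0$ for $m\ge1$. Equivalently, $\sum_{n\ge0}H_n(m)z^n=\frac{(-\ln(1-z))^m}{1-z}$. The (signed) Stirling numbers of the first kind $s(n,k)$ are defined by $\sum_{n\ge k}s(n,k)\frac{z^n}{n!}=\frac{\ln^k(1+z)}{k!}$, with $s(n,k)=0$ for $n<k$. *)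

theory Defs
  imports "HOL-Analysis.Analysis" "HOL-Combinatorics.Stirling"
begin

definition sstirling :: "nat \<Rightarrow> nat \<Rightarrow> int" where
  "sstirling n k = (-1) ^ (n - k) * int (stirling n k)"

text \<open>For m = 0 the only
tuple is the empty one, giving H_n(0) = 1; for n = 0, m >= 1 the sum is empty.\<close>
definition Hm :: "nat \<Rightarrow> nat \<Rightarrow> real" where
  "Hm n m = (\<Sum>k\<in>{k \<in> {..<m} \<rightarrow>\<^sub>E {1..n}. (\<Sum>i<m. k i) \<le> n}.
              1 / (\<Prod>i<m. real (k i)))"

end

theory Submission imports Defs "HOL-Computational_Algebra.Formal_Power_Series" "HOL-Computational_Algebra.Polynomial" begin

abbreviation PX :: "real poly" where "PX \<equiv> [:0, 1:]"

lemma poch_X: "pochhammer PX k = (\<Sum>j\<le>k. monom (of_nat (stirling k j)) j)"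
proof -
  have "pochhammer PX k = (\<Sum>j\<le>k. of_nat (stirling k j) * PX ^ j)"
    by (rule stirling_pochhammer[symmetric])
  also have "\<dots> = (\<Sum>j\<le>k. monom (of_nat (stirling k j)) j)"
    by (intro sum.cong refl) (simp add: monom_altdef of_nat_poly)
  finally show ?thesis .
qed

lemma poch_mX: "pochhammer (-PX) k = (\<Sum>j\<le>k. monom ((-1)^j * of_nat (stirling k j)) j)"
proof -
  have "pochhammer (-PX) k = (\<Sum>j\<le>k. of_nat (stirling k j) * (-PX) ^ j)"
    by (rule stirling_pochhammer[symmetric])
  also have "\<dots> = (\<Sum>j\<le>k. monom ((-1)^j * of_nat (stirling k j)) j)"
  proof (intro sum.cong refl)
    fix j
    have "-PX = smult (-1) PX" by simp
    then have e: "(-PX)^j = smult ((-1)^j) (PX^j)" by (simp only: smult_power)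
    show "of_nat (stirling k j) * (-PX) ^ j = monom ((-1)^j * of_nat (stirling k j)) j"
      unfolding e by (simp add: monom_altdef of_nat_poly)
  qed
  finally show ?thesis .
qed

lemma coeff_poch_X: "coeff (pochhammer PX k) m = of_nat (stirling k m)"
  by (cases "m \<le> k") (auto simp: poch_X coeff_sum coeff_monom)

lemma coeff_poch_mX: "coeff (pochhammer (-PX) k) m = (-1)^m * of_nat (stirling k m)"
  by (subst poch_mX) (cases "m \<le> k", auto simp: coeff_sum)

lemma poly_poch: "poly (pochhammer p k) x = pochhammer (poly p x) k"
  by (induction k) (simp_all add: pochhammer_Suc)

lemma vdm: "(\<Sum>k\<le>n. of_nat (n choose k) * (a gchoose k)) = (a + of_nat n gchoose n :: real)"
proof -
  have "(\<Sum>k\<le>n. of_nat (n choose k) * (a gchoose k)) = (\<Sum>k=0..n. (a gchoose k) * (of_nat n gchoose (n - k)))"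
    by (intro sum.cong) (auto simp: atLeast0AtMost binomial_gbinomial[symmetric] binomial_symmetric[symmetric])
  also have "\<dots> = (a + of_nat n gchoose n)" by (rule gbinomial_Vandermonde)
  finally show ?thesis .
qed

lemma psum: "(\<Sum>k\<le>n. pochhammer x k / fact k) = (x + of_nat n gchoose n :: real)"
proof -
  have "(\<Sum>k\<le>n. pochhammer x k / fact k) = (\<Sum>k\<le>n. (x - 1) + of_nat k gchoose k)"
    by (intro sum.cong refl) (simp add: gbinomial_pochhammer')
  also have "\<dots> = x + of_nat n gchoose n" by (subst gbinomial_parallel_sum) simp
  finally show ?thesis .
qed

definition A :: "nat \<Rightarrow> nat \<Rightarrow> (nat \<Rightarrow> nat) set" where
  "A n m = {k \<in> {..<m} \<rightarrow>\<^sub>E {1..n}. (\<Sum>i<m. k i) \<le> n}"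

lemma Hm_A: "Hm n m = (\<Sum>k\<in>A n m. 1 / (\<Prod>i<m. real (k i)))"
  unfolding Hm_def A_def ..

lemma finite_A: "finite (A n m)"
  unfolding A_def by (rule finite_subset[OF _ finite_PiE[of "{..<m}" "\<lambda>_. {1..n}"]]) auto

lemma A_bij: "bij_betw (\<lambda>(j,k'). k'(m:=j)) (SIGMA j:{1..n}. A (n-j) m) (A n (Suc m))"
  unfolding bij_betw_def
proof
  show "inj_on (\<lambda>(j,k'). k'(m:=j)) (SIGMA j:{1..n}. A (n-j) m)"
  proof (rule inj_onI)
    fix x y
    assume 1: "x \<in> (SIGMA j:{1..n}. A (n-j) m)" and 2: "y \<in> (SIGMA j:{1..n}. A (n-j) m)"
      and e0: "(\<lambda>(j,k'). k'(m:=j)) x = (\<lambda>(j,k'). k'(m:=j)) y"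
    obtain j1 k1 where x: "x = (j1, k1)" by (cases x)
    obtain j2 k2 where y: "y = (j2, k2)" by (cases y)
    have e: "k1(m := j1) = k2(m := j2)" using e0 by (simp add: x y)
    have "j1 = j2" using fun_cong[OF e, of m] by simp
    moreover have "k1 = k2"
    proof
      fix i
      show "k1 i = k2 i"
      proof (cases "i = m")
        case True
        have "k1 m = undefined" using 1 by (auto simp: x A_def PiE_def extensional_def)
        moreover have "k2 m = undefined" using 2 by (auto simp: y A_def PiE_def extensional_def)
        ultimately show ?thesis using True by simp
      next
        case False
        then show ?thesis using fun_cong[OF e, of i] by simp
      qed
    qed
    ultimately show "x = y" by (simp add: x y)
  qed
next
  show "(\<lambda>(j,k'). k'(m:=j)) ` (SIGMA j:{1..n}. A (n-j) m) = A n (Suc m)"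
  proof (intro equalityI subsetI)
    fix x assume "x \<in> (\<lambda>(j,k'). k'(m:=j)) ` (SIGMA j:{1..n}. A (n-j) m)"
    then obtain j k' where j: "j \<in> {1..n}" and k': "k' \<in> A (n-j) m" and x: "x = k'(m:=j)" by auto
    have s: "(\<Sum>i<Suc m. x i) = (\<Sum>i<m. k' i) + j"
      by (simp add: x)
    have kP: "k' \<in> {..<m} \<rightarrow>\<^sub>E {1..n-j}" using k' by (simp add: A_def)
    have "x \<in> {..<Suc m} \<rightarrow>\<^sub>E {1..n}"
    proof (rule PiE_I)
      fix i assume i: "i \<in> {..<Suc m}"
      show "x i \<in> {1..n}"
      proof (cases "i = m")
        case True then show ?thesis using j by (simp add: x)
      next
        case False
        then have "i \<in> {..<m}" using i by auto
        then have "k' i \<in> {1..n-j}" using kP by blast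
        then show ?thesis using False by (auto simp: x)
      qed
    next
      fix i assume i: "i \<notin> {..<Suc m}"
      then have "i \<notin> {..<m}" "i \<noteq> m" by auto
      moreover have "k' i = undefined" by (rule PiE_arb[OF kP]) fact
      ultimately show "x i = undefined" by (simp add: x)
    qed
    moreover have "(\<Sum>i<Suc m. x i) \<le> n"
    proof -
      have ks: "(\<Sum>i<m. k' i) \<le> n - j" using k' by (simp add: A_def)
      have "j \<le> n" using j by simp
      then show ?thesis unfolding s using ks by arith
    qed
    ultimately show "x \<in> A n (Suc m)" by (simp add: A_def)
  next
    fix x assume x: "x \<in> A n (Suc m)"
    define j where "j = x m"
    define k' where "k' = x(m:=undefined)"
    have xe: "x = k'(m:=j)" by (simp add: j_def k'_def)
    have xP: "x \<in> {..<Suc m} \<rightarrow>\<^sub>E {1..n}" using x unfolding A_def by blast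
    have xs: "(\<Sum>i<Suc m. x i) \<le> n" using x unfolding A_def by blast
    have s: "(\<Sum>i<Suc m. x i) = (\<Sum>i<m. x i) + j" by (simp add: j_def)
    have j: "j \<in> {1..n}" unfolding j_def by (rule PiE_mem[OF xP]) simp
    have le: "x i \<le> (\<Sum>i<m. x i)" if "i < m" for i
      by (rule member_le_sum) (use that in auto)
    have kA: "k' \<in> {..<m} \<rightarrow>\<^sub>E {1..n-j}"
    proof (rule PiE_I)
      fix i assume i: "i \<in> {..<m}"
      then have "x i \<in> {1..n}" by (intro PiE_mem[OF xP]) auto
      then have "x i \<ge> 1" by simp
      moreover have "x i \<le> n - j" using le[of i] i s xs by simp
      moreover have "k' i = x i" using i by (simp add: k'_def)
      ultimately show "k' i \<in> {1..n-j}" by simp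
    next
      fix i assume i: "i \<notin> {..<m}"
      show "k' i = undefined"
      proof (cases "i = m")
        case True then show ?thesis by (simp add: k'_def)
      next
        case False
        then have "i \<notin> {..<Suc m}" using i by simp
        then have "x i = undefined" by (rule PiE_arb[OF xP])
        then show ?thesis using False by (simp add: k'_def)
      qed
    qed
    have "(\<Sum>i<m. k' i) = (\<Sum>i<m. x i)" by (intro sum.cong) (auto simp: k'_def)
    then have "(\<Sum>i<m. k' i) \<le> n - j" using s xs by simp
    with kA have kA': "k' \<in> A (n-j) m" by (simp add: A_def)
    show "x \<in> (\<lambda>(j,k'). k'(m:=j)) ` (SIGMA j:{1..n}. A (n-j) m)"
      by (rule image_eqI[where x="(j,k')"]) (use xe j kA' in auto)
  qed
qed

lemma Hm_0: "Hm n 0 = 1"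
  by (simp add: Hm_def)

lemma Hm_Suc: "Hm n (Suc m) = (\<Sum>j=1..n. Hm (n-j) m / real j)"
proof -
  let ?g = "\<lambda>k::nat\<Rightarrow>nat. 1 / (\<Prod>i<Suc m. real (k i))"
  have "Hm n (Suc m) = (\<Sum>k\<in>A n (Suc m). ?g k)" by (rule Hm_A)
  also have "\<dots> = (\<Sum>x\<in>(SIGMA j:{1..n}. A (n-j) m). ?g ((\<lambda>(j,k'). k'(m:=j)) x))"
    by (rule sum.reindex_bij_betw[OF A_bij, symmetric])
  also have "\<dots> = (\<Sum>j\<in>{1..n}. \<Sum>k'\<in>A (n-j) m. ?g (k'(m:=j)))"
    by (subst sum.Sigma) (auto simp: finite_A split_def)
  also have "\<dots> = (\<Sum>j\<in>{1..n}. \<Sum>k'\<in>A (n-j) m. (1 / (\<Prod>i<m. real (k' i))) / real j)"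
  proof (intro sum.cong refl)
    fix j k' assume "j \<in> {1..n}"
    have "(\<Prod>i<Suc m. real ((k'(m:=j)) i)) = (\<Prod>i<m. real (k' i)) * real j"
      by (simp add: prod.lessThan_Suc)
    then show "?g (k'(m:=j)) = (1 / (\<Prod>i<m. real (k' i))) / real j" by simp
  qed
  also have "\<dots> = (\<Sum>j=1..n. Hm (n-j) m / real j)"
    by (simp add: Hm_A sum_divide_distrib)
  finally show ?thesis .
qed

definition L :: "real fps" where "L = Abs_fps (\<lambda>j. if j = 0 then 0 else 1 / of_nat j)"
definition Ones :: "real fps" where "Ones = Abs_fps (\<lambda>_. 1)"
definition E :: "nat \<Rightarrow> real fps" where "E m = Abs_fps (\<lambda>n. of_nat (stirling n m) / fact n)"

lemma Hm_fps: "Hm n m = fps_nth (L^m * Ones) n"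
proof (induction m arbitrary: n)
  case 0 show ?case by (simp add: Hm_0 Ones_def)
next
  case (Suc m)
  have "fps_nth (L^Suc m * Ones) n = fps_nth (L * (L^m * Ones)) n" by (simp add: mult.assoc)
  also have "\<dots> = (\<Sum>i=0..n. fps_nth L i * fps_nth (L^m*Ones) (n-i))" by (rule fps_mult_nth)
  also have "\<dots> = (\<Sum>i=0..n. fps_nth L i * Hm (n-i) m)" using Suc.IH by simp
  also have "\<dots> = fps_nth L 0 * Hm (n-0) m + (\<Sum>i=Suc 0..n. fps_nth L i * Hm (n-i) m)"
    by (rule sum.atLeast_Suc_atMost) simp
  also have "\<dots> = (\<Sum>i=1..n. Hm (n-i) m / real i)"
    by (auto simp: L_def intro!: sum.cong)
  finally show ?case by (simp add: Hm_Suc)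
qed

lemma DL: "fps_deriv L = fps_X * fps_deriv L + 1"
proof (rule fps_ext)
  fix n show "fps_nth (fps_deriv L) n = fps_nth (fps_X * fps_deriv L + 1) n"
    by (cases n) (simp_all add: L_def fps_X_mult_nth)
qed

lemma aux_frac: "(F::real) \<noteq> 0 \<Longrightarrow> real (Suc (Suc p)) * (real (Suc p) * a + b) / (real (Suc (Suc p)) * F) = real (Suc p) * a / F + b / F"
  by (simp add: field_simps del: of_nat_Suc)

lemma DE: "fps_deriv (E (Suc m)) = fps_X * fps_deriv (E (Suc m)) + E m"
proof (rule fps_ext)
  fix n show "fps_nth (fps_deriv (E (Suc m))) n = fps_nth (fps_X * fps_deriv (E (Suc m)) + E m) n"
  proof (cases n)
    case 0 then show ?thesis by (simp add: E_def fps_X_mult_nth)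
  next
    case (Suc p)
    have st: "real (stirling (Suc (Suc p)) (Suc m)) = real (Suc p) * real (stirling (Suc p) (Suc m)) + real (stirling (Suc p) m)"
      by (simp only: stirling.simps(4) of_nat_add of_nat_mult)
    have f1: "fact (Suc (Suc p)) = real (Suc (Suc p)) * fact (Suc p)" by (simp add: fact_Suc)
    have f2: "fact (Suc p) = real (Suc p) * (fact p :: real)" by (simp add: fact_Suc)
    have "fps_nth (fps_deriv (E (Suc m))) n = real (Suc (Suc p)) * real (stirling (Suc (Suc p)) (Suc m)) / fact (Suc (Suc p))"
      by (simp add: E_def Suc)
    also have "\<dots> = real (Suc p) * real (stirling (Suc p) (Suc m)) / fact (Suc p) + real (stirling (Suc p) m) / fact (Suc p)"
      unfolding st f1 by (rule aux_frac) simp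
    also have "\<dots> = fps_nth (fps_X * fps_deriv (E (Suc m)) + E m) n"
      by (simp add: E_def Suc fps_X_mult_nth)
    finally show ?thesis .
  qed
qed

lemma E0: "E 0 = 1"
proof (rule fps_ext)
  fix n show "fps_nth (E 0) n = fps_nth 1 n" by (cases n) (simp_all add: E_def)
qed

lemma L_E: "L^m = fps_const (fact m) * E m"
proof (induction m)
  case 0 show ?case by (simp add: E0)
next
  case (Suc m)
  define F where "F = L ^ Suc m"
  define G where "G = fps_const (fact (Suc m)) * E (Suc m)"
  have dF1: "fps_deriv F = fps_const (of_nat (Suc m)) * fps_deriv L * L ^ m"
    unfolding F_def fps_deriv_power by simp
  have "fps_deriv F = fps_const (of_nat (Suc m)) * fps_deriv L * L ^ m" by (rule dF1)
  also have "\<dots> = fps_const (of_nat (Suc m)) * (fps_X * fps_deriv L + 1) * L ^ m"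
    by (subst DL) (rule refl)
  also have "\<dots> = fps_X * (fps_const (of_nat (Suc m)) * fps_deriv L * L ^ m) + fps_const (of_nat (Suc m)) * L^m"
    by (simp add: algebra_simps)
  finally have dF0: "fps_deriv F = fps_X * (fps_const (of_nat (Suc m)) * fps_deriv L * L ^ m) + fps_const (of_nat (Suc m)) * L^m" .
  have dF: "fps_deriv F = fps_X * fps_deriv F + fps_const (of_nat (Suc m)) * L^m"
    using dF0 by (simp only: dF1[symmetric])
  have cm: "fps_const (of_nat (Suc m)) * L^m = fps_const (fact (Suc m)) * E m"
    unfolding Suc.IH mult.assoc[symmetric] fps_const_mult fact_Suc by (rule refl)
  have "fps_deriv G = fps_const (fact (Suc m)) * fps_deriv (E (Suc m))"
    by (simp add: G_def)
  also have "\<dots> = fps_const (fact (Suc m)) * (fps_X * fps_deriv (E (Suc m)) + E m)"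
    by (subst DE) (rule refl)
  finally have dG: "fps_deriv G = fps_X * fps_deriv G + fps_const (of_nat (Suc m)) * L^m"
    unfolding cm by (simp add: G_def algebra_simps)
  have e1: "(1 - fps_X) * fps_deriv F = fps_const (of_nat (Suc m)) * L^m"
    using dF by (simp add: algebra_simps)
  have e2: "(1 - fps_X) * fps_deriv G = fps_const (of_nat (Suc m)) * L^m"
    using dG by (simp add: algebra_simps)
  have nz: "(1 - fps_X :: real fps) \<noteq> 0"
  proof
    assume "(1 - fps_X :: real fps) = 0"
    then have "fps_nth (1 - fps_X :: real fps) 0 = 0" by simp
    then show False by simp
  qed
  have "(1 - fps_X) * fps_deriv F = (1 - fps_X) * fps_deriv G" using e1 e2 by simp
  then have "fps_deriv F = fps_deriv G" using nz by simp
  then obtain c where c: "F = fps_const c + G" by (auto simp: fps_deriv_eq_iff_ex)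
  have "fps_nth F 0 = 0" by (simp add: F_def fps_nth_power_0 L_def)
  moreover have "fps_nth G 0 = 0" by (simp add: G_def E_def)
  ultimately have "c = 0" using arg_cong[OF c, of "\<lambda>f. fps_nth f 0"] by simp
  with c show ?case by (simp add: F_def G_def)
qed

lemma Hm_stir: "Hm n m = fact m * (\<Sum>k\<le>n. of_nat (stirling k m) / fact k)"
proof -
  have "Hm n m = (\<Sum>i=0..n. fps_nth (fps_const (fact m) * E m) i * fps_nth Ones (n - i))"
    by (simp add: Hm_fps L_E fps_mult_nth del: fps_mult_left_const_nth)
  also have "\<dots> = fact m * (\<Sum>k\<le>n. of_nat (stirling k m) / fact k)"
    by (simp add: Ones_def E_def sum_distrib_left atLeast0AtMost)
  finally show ?thesis .
qed

lemma poly_PX: "poly PX x = x" by simp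
lemma poly_mPX: "poly (-PX) x = -x" by simp

lemma id2_aux: "(\<Sum>k\<le>n. of_nat (n choose k) * (-1)^k / fact k * ((-1)^m * of_nat (stirling k m)))
   = (\<Sum>k\<le>n. 1 / fact k * of_nat (stirling k m) :: real)"
proof -
  define P where "P = (\<Sum>k\<le>n. smult (of_nat (n choose k) * (-1)^k / fact k) (pochhammer (-PX) k))"
  define Q where "Q = (\<Sum>k\<le>n. smult (1 / fact k) (pochhammer PX k))"
  have "poly P = poly Q"
  proof
    fix x :: real
    have "poly P x = (\<Sum>k\<le>n. of_nat (n choose k) * ((-1)^k * pochhammer (-x) k / fact k))"
      unfolding P_def poly_sum poly_smult poly_poch poly_mPX by (simp add: field_simps)
    also have "\<dots> = (\<Sum>k\<le>n. of_nat (n choose k) * (x gchoose k))"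
      by (simp add: gbinomial_pochhammer)
    also have "\<dots> = x + of_nat n gchoose n" by (rule vdm)
    also have "\<dots> = (\<Sum>k\<le>n. pochhammer x k / fact k)" by (rule psum[symmetric])
    also have "\<dots> = poly Q x"
      unfolding Q_def poly_sum poly_smult poly_poch poly_PX by simp
    finally show "poly P x = poly Q x" .
  qed
  then have "P = Q" by (simp add: poly_eq_poly_eq_iff)
  then have "coeff P m = coeff Q m" by simp
  then show ?thesis
    unfolding P_def Q_def coeff_sum coeff_smult coeff_poch_mX coeff_poch_X .
qed

lemma id1_aux: "(\<Sum>k\<le>n. of_nat (n choose k) * (-1)^k * (\<Sum>j\<le>k. 1 / fact j * of_nat (stirling j m)))
   = (1 / fact n * ((-1)^m * of_nat (stirling n m)) :: real)"
proof -
  define P where "P = (\<Sum>k\<le>n. smult (of_nat (n choose k) * (-1)^k) (\<Sum>j\<le>k. smult (1 / fact j) (pochhammer PX j)))"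
  define R where "R = smult (1 / fact n) (pochhammer (-PX) n)"
  have "poly P = poly R"
  proof
    fix x :: real
    have neg: "(x + of_nat k gchoose k) = (-1)^k * ((-x-1) gchoose k)" for k
    proof -
      have "(-x-1) gchoose k = (-1)^k * (of_nat k - (-x-1) - 1 gchoose k)" by (rule gbinomial_negated_upper)
      also have "of_nat k - (-x-1) - 1 = x + of_nat k" by simp
      finally have "(-1)^k * ((-x-1) gchoose k) = ((-1)^k * (-1)^k) * (x + of_nat k gchoose k)"
        by simp
      also have "(-1::real)^k * (-1)^k = 1" by (simp flip: power_mult_distrib)
      finally show ?thesis by simp
    qed
    have "poly P x = (\<Sum>k\<le>n. of_nat (n choose k) * (-1)^k * (\<Sum>j\<le>k. pochhammer x j / fact j))"
      unfolding P_def poly_sum poly_smult poly_poch poly_PX by simp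
    also have "\<dots> = (\<Sum>k\<le>n. of_nat (n choose k) * (-1)^k * (x + of_nat k gchoose k))"
      by (simp add: psum)
    also have "\<dots> = (\<Sum>k\<le>n. of_nat (n choose k) * ((-x-1) gchoose k))"
    proof (intro sum.cong refl)
      fix k
      have "(-1::real)^k * (-1)^k = 1" by (simp flip: power_mult_distrib)
      then show "of_nat (n choose k) * (-1)^k * (x + of_nat k gchoose k) = of_nat (n choose k) * ((-x-1) gchoose k)"
        unfolding neg by (simp add: mult.assoc[symmetric])
    qed
    also have "\<dots> = (-x-1) + of_nat n gchoose n" by (rule vdm)
    also have "\<dots> = (-1)^n * (of_nat n - ((-x-1) + of_nat n) - 1 gchoose n)" by (rule gbinomial_negated_upper)
    also have "of_nat n - ((-x-1) + of_nat n) - 1 = x" by simp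
    also have "(-1)^n * (x gchoose n) = pochhammer (-x) n / fact n"
    proof -
      have "(-1::real)^n * (-1)^n = 1" by (simp flip: power_mult_distrib)
      then show ?thesis by (simp add: gbinomial_pochhammer mult.assoc[symmetric])
    qed
    also have "\<dots> = poly R x"
      unfolding R_def poly_smult poly_poch poly_mPX by simp
    finally show "poly P x = poly R x" .
  qed
  then have "P = R" by (simp add: poly_eq_poly_eq_iff)
  then have "coeff P m = coeff R m" by simp
  then show ?thesis
    unfolding P_def R_def coeff_sum coeff_smult coeff_poch_mX coeff_poch_X .
qed

lemma sign_aux: "m \<le> k \<Longrightarrow> (-1::real)^(k-m) = (-1)^k * (-1)^m"
proof -
  assume "m \<le> k"
  then obtain d where k: "k = m + d" using le_Suc_ex by blast
  have "(-1::real)^m * (-1)^m = 1" by (simp flip: power_mult_distrib)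
  then show ?thesis unfolding k by (simp add: power_add mult.assoc[symmetric] mult.commute[of "(-1::real)^d"])
qed

theorem corollary2:
  fixes n m :: nat
  shows "((\<Sum>k=0..n. real (n choose k) * (-1) ^ k * Hm k m)
           = (-1) ^ n * fact m / fact n * real_of_int (sstirling n m)) \<and>
         ((\<Sum>k=m..n. real (n choose k) * real_of_int (sstirling k m) / fact k)
           = Hm n m / fact m)"
proof
  have "(\<Sum>k=0..n. real (n choose k) * (-1) ^ k * Hm k m)
      = fact m * (\<Sum>k\<le>n. of_nat (n choose k) * (-1)^k * (\<Sum>j\<le>k. 1 / fact j * of_nat (stirling j m)))"
    by (simp add: Hm_stir sum_distrib_left atLeast0AtMost mult.left_commute)
  also have "\<dots> = fact m * (1 / fact n * ((-1)^m * of_nat (stirling n m)))"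
    by (simp only: id1_aux)
  also have "\<dots> = (-1) ^ n * fact m / fact n * real_of_int (sstirling n m)"
  proof (cases "m \<le> n")
    case True
    have "(-1::real)^n * (-1)^(n-m) = (-1)^m"
    proof -
      have "(-1::real)^n * (-1)^n = 1" by (simp flip: power_mult_distrib)
      then show ?thesis using sign_aux[OF True] by (simp add: mult.assoc[symmetric])
    qed
    note e = this
    have "real_of_int (sstirling n m) = (-1)^(n-m) * real (stirling n m)" by (simp add: sstirling_def)
    then show ?thesis unfolding e[symmetric] by (simp add: field_simps)
  next
    case False
    then show ?thesis by (simp add: sstirling_def)
  qed
  finally show "(\<Sum>k=0..n. real (n choose k) * (-1) ^ k * Hm k m)
           = (-1) ^ n * fact m / fact n * real_of_int (sstirling n m)" .
next
  have "(\<Sum>k=m..n. real (n choose k) * real_of_int (sstirling k m) / fact k)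
      = (\<Sum>k\<le>n. of_nat (n choose k) * (-1)^k / fact k * ((-1)^m * of_nat (stirling k m)))"
  proof (rule sum.mono_neutral_cong_left)
    show "finite {..n}" by simp
    show "{m..n} \<subseteq> {..n}" by auto
    show "\<forall>i\<in>{..n} - {m..n}. of_nat (n choose i) * (-1)^i / fact i * ((-1)^m * of_nat (stirling i m)) = (0::real)"
      by auto
    fix k assume "k \<in> {m..n}"
    then have "m \<le> k" by simp
    then show "real (n choose k) * real_of_int (sstirling k m) / fact k = of_nat (n choose k) * (-1)^k / fact k * ((-1)^m * of_nat (stirling k m))"
      by (simp add: sstirling_def sign_aux)
  qed
  also have "\<dots> = (\<Sum>k\<le>n. 1 / fact k * of_nat (stirling k m))" by (rule id2_aux)
  also have "\<dots> = Hm n m / fact m" by (simp add: Hm_stir)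
  finally show "(\<Sum>k=m..n. real (n choose k) * real_of_int (sstirling k m) / fact k) = Hm n m / fact m" .
qed

end
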